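(* Let $a,b\in\mathbb{C}$ and $\theta,\tau\in S_n$ be such that $A=aP_\theta+bP_\tau$ is positive semidefinite. Then for every subgroup $G$ of $S_n$ and every character $\chi$ of $G$, $$\frac{1}{\chi(\mathrm{id})}\,d_\chi^G(A)\le\operatorname{per}(A).$$
   Context: A character $\chi$ of $G$ is $\chi(g)=\operatorname{tr}\rho(g)$ for a representation $\rho$ of $G$ on a finite-dimensional complex vector space. The generalized matrix function is $d_\chi^G(A)=\sum_{\sigma\in G}\chi(\sigma)\prod_{i=1}^n A_{i\,\sigma(i)}$. For $\theta\in S_n$, $(P_\theta)_{ij}=1$ if $\theta^{-1}(i)=j$ and $0$ otherwise. Positive semidefinite means Hermitian with nonnegative eigenvalues. $\operatorname{per}$ is the permanent. *)

theory Defs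
  imports "HOL-Analysis.Analysis" "HOL-Library.Complex_Order"
begin

text \<open>Matrices are indexed by a finite type 'n (so n = CARD('n)); S_n is the set of
permutations of UNIV :: 'n set.\<close>

definition perm_mat :: "('n::finite \<Rightarrow> 'n) \<Rightarrow> complex^'n^'n" where
  "perm_mat \<theta> = (\<chi> i j. if inv \<theta> i = j then 1 else 0)"

definition mat_scale :: "complex \<Rightarrow> complex^'n::finite^'n \<Rightarrow> complex^'n^'n" where
  "mat_scale c A = (\<chi> i j. c * A $ i $ j)"

definition perm_subgroup :: "('n::finite \<Rightarrow> 'n) set \<Rightarrow> bool" where
  "perm_subgroup G \<longleftrightarrow> (\<forall>\<sigma>\<in>G. \<sigma> permutes (UNIV :: 'n set)) \<and> id \<in> G
     \<and> (\<forall>\<sigma>\<in>G. \<forall>\<tau>\<in>G. \<sigma> \<circ> \<tau> \<in> G) \<and> (\<forall>\<sigma>\<in>G. inv \<sigma> \<in> G)"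

definition is_representation ::
  "('n::finite \<Rightarrow> 'n) set \<Rightarrow> (('n \<Rightarrow> 'n) \<Rightarrow> complex^'m::finite^'m) \<Rightarrow> bool" where
  "is_representation G \<rho> \<longleftrightarrow> \<rho> id = mat 1 \<and>
     (\<forall>\<sigma>\<in>G. \<forall>\<tau>\<in>G. \<rho> (\<sigma> \<circ> \<tau>) = \<rho> \<sigma> ** \<rho> \<tau>)"

definition gen_matrix_fun ::
  "('n::finite \<Rightarrow> 'n) set \<Rightarrow> (('n \<Rightarrow> 'n) \<Rightarrow> complex) \<Rightarrow> complex^'n^'n \<Rightarrow> complex" where
  "gen_matrix_fun G \<chi>' A = (\<Sum>\<sigma>\<in>G. \<chi>' \<sigma> * (\<Prod>i\<in>UNIV. A $ i $ \<sigma> i))"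

definition per :: "complex^'n::finite^'n \<Rightarrow> complex" where
  "per A = (\<Sum>\<sigma>\<in>{\<sigma>. \<sigma> permutes (UNIV :: 'n set)}. \<Prod>i\<in>UNIV. A $ i $ \<sigma> i)"

definition hermitian_mat :: "complex^'n::finite^'n \<Rightarrow> bool" where
  "hermitian_mat A \<longleftrightarrow> (\<forall>i j. A $ i $ j = cnj (A $ j $ i))"

definition is_eigenvalue :: "complex^'n::finite^'n \<Rightarrow> complex \<Rightarrow> bool" where
  "is_eigenvalue A c \<longleftrightarrow> (\<exists>v. v \<noteq> 0 \<and> A *v v = c *s v)"

definition psd :: "complex^'n::finite^'n \<Rightarrow> bool" where
  "psd A \<longleftrightarrow> hermitian_mat A \<and> (\<forall>c. is_eigenvalue A c \<longrightarrow> c \<in> \<real> \<and> Re c \<ge> 0)"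

end

theory Submission
  imports Defs
begin


lemma range_mv_subspace: "vec.subspace (range (\<lambda>x. (E::complex^'m::finite^'m) *v x))"
  by (rule vec.subspace_image[OF vec.subspace_UNIV])

lemma mm_sub_ldistrib: "(A::'a::comm_ring_1^'n::finite^'m) ** (B - C) = A ** B - A ** C"
  by (simp add: vec_eq_iff matrix_matrix_mult_def algebra_simps sum_subtractf)
lemma mm_sub_rdistrib: "((B::'a::comm_ring_1^'n::finite^'m) - C) ** (A::'a^'k::finite^'n) = B ** A - C ** A"
  by (simp add: vec_eq_iff matrix_matrix_mult_def algebra_simps sum_subtractf)

lemma idem_trace_nat:
  fixes E :: "complex^'m::finite^'m"
  assumes "E ** E = E"
  shows "\<exists>k::nat. trace E = of_nat k"
  using assms
proof (induction "vec.dim (range (\<lambda>x. E *v x))" arbitrary: E rule: less_induct)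
  case less
  show ?case
  proof (cases "E = 0")
    case True then show ?thesis by (auto simp: trace_def intro: exI[of _ 0])
  next
    case False
    then obtain i j where ij: "E $ i $ j \<noteq> 0" by (metis vec_eq_iff zero_index)
    define u :: "complex^'m" where "u = axis j 1"
    define v where "v = E *v u"
    have Ev: "E *v v = v" unfolding v_def using less.prems by (simp add: matrix_vector_mul_assoc)
    have "v $ i \<noteq> 0" using ij by (simp add: v_def u_def matrix_vector_mult_def axis_def if_distrib cong: if_cong)
    define k where "k = i"
    have vk: "v $ k \<noteq> 0" using \<open>v $ i \<noteq> 0\<close> k_def by simp
    define f :: "complex^'m" where "f = (\<chi> j. E $ k $ j / v $ k)"
    define F :: "complex^'m^'m" where "F = (\<chi> i j. v $ i * f $ j)"
    have fE: "(\<Sum>l\<in>UNIV. f $ l * E $ l $ j) = f $ j" for j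
    proof -
      have "(\<Sum>l\<in>UNIV. f $ l * E $ l $ j) = (\<Sum>l\<in>UNIV. E $ k $ l * E $ l $ j) / v $ k"
        by (simp add: f_def sum_divide_distrib)
      also have "(\<Sum>l\<in>UNIV. E $ k $ l * E $ l $ j) = E $ k $ j"
      proof -
        have "(E ** E) $ k $ j = E $ k $ j" using less.prems by simp
        then show ?thesis by (simp add: matrix_matrix_mult_def)
      qed
      finally show ?thesis by (simp add: f_def)
    qed
    have fv: "(\<Sum>l\<in>UNIV. f $ l * v $ l) = 1"
    proof -
      have "(\<Sum>l\<in>UNIV. f $ l * v $ l) = (\<Sum>l\<in>UNIV. E $ k $ l * v $ l) / v $ k"
        by (simp add: f_def sum_divide_distrib)
      also have "(\<Sum>l\<in>UNIV. E $ k $ l * v $ l) = v $ k"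
      proof -
        have "(E *v v) $ k = v $ k" using Ev by simp
        then show ?thesis by (simp add: matrix_vector_mult_def)
      qed
      finally show ?thesis using vk by simp
    qed
    have Evi: "(\<Sum>l\<in>UNIV. E $ i $ l * v $ l) = v $ i" for i
    proof -
      have "(E *v v) $ i = v $ i" using Ev by simp
      then show ?thesis by (simp add: matrix_vector_mult_def)
    qed
    have EF: "E ** F = F"
      by (simp add: vec_eq_iff matrix_matrix_mult_def F_def mult.assoc[symmetric] sum_distrib_right[symmetric] Evi)
    have FE: "F ** E = F"
      by (simp add: vec_eq_iff matrix_matrix_mult_def F_def mult.assoc sum_distrib_left[symmetric] fE)
    have FF: "F ** F = F"
    proof -
      have "(\<Sum>l\<in>UNIV. v $ i * f $ l * (v $ l * f $ j)) = v $ i * f $ j * (\<Sum>l\<in>UNIV. f $ l * v $ l)" for i j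
        by (simp add: sum_distrib_left algebra_simps)
      then show ?thesis by (simp add: vec_eq_iff matrix_matrix_mult_def F_def fv)
    qed
    have trF: "trace F = 1"
      using fv by (simp add: trace_def F_def mult.commute)
    define E' where "E' = E - F"
    have E'E': "E' ** E' = E'"
      unfolding E'_def by (simp add: mm_sub_ldistrib mm_sub_rdistrib less.prems EF FE FF)
    have EE': "E ** E' = E'"
      unfolding E'_def by (simp add: mm_sub_ldistrib less.prems EF)
    have sub: "range (\<lambda>x. E' *v x) \<subseteq> range (\<lambda>x. E *v x)"
    proof
      fix y assume "y \<in> range (\<lambda>x. E' *v x)"
      then obtain x where "y = E' *v x" by auto
      then have "y = E *v (E' *v x)" using EE' by (simp add: matrix_vector_mul_assoc)
      then show "y \<in> range (\<lambda>x. E *v x)" by auto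
    qed
    have fE': "(\<Sum>l\<in>UNIV. f $ l * (E' *v x) $ l) = 0" for x
    proof -
      have "(\<Sum>l\<in>UNIV. f $ l * (E' *v x) $ l) = (\<Sum>l\<in>UNIV. \<Sum>m\<in>UNIV. f $ l * E' $ l $ m * x $ m)"
        by (simp add: matrix_vector_mult_def sum_distrib_left mult.assoc)
      also have "\<dots> = (\<Sum>m\<in>UNIV. (\<Sum>l\<in>UNIV. f $ l * E' $ l $ m) * x $ m)"
        by (subst sum.swap) (simp add: sum_distrib_right)
      also have "\<dots> = 0"
      proof -
        have "(\<Sum>l\<in>UNIV. f $ l * E' $ l $ m) = 0" for m
        proof -
          have "(\<Sum>l\<in>UNIV. f $ l * E' $ l $ m) = (\<Sum>l\<in>UNIV. f $ l * E $ l $ m) - (\<Sum>l\<in>UNIV. f $ l * v $ l) * f $ m"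
            by (simp add: E'_def F_def algebra_simps sum_subtractf sum_distrib_right sum_distrib_left mult.left_commute)
          then show ?thesis using fE fv by simp
        qed
        then show ?thesis by simp
      qed
      finally show ?thesis .
    qed
    have "v \<notin> range (\<lambda>x. E' *v x)"
    proof
      assume "v \<in> range (\<lambda>x. E' *v x)"
      then obtain x where "v = E' *v x" by auto
      then show False using fE'[of x] fv by simp
    qed
    moreover have "v \<in> range (\<lambda>x. E *v x)" unfolding v_def by auto
    ultimately have ps: "range (\<lambda>x. E' *v x) \<subset> range (\<lambda>x. E *v x)" using sub by blast
    have s1: "vec.span (range (\<lambda>x. E *v x)) = range (\<lambda>x. E *v x)"
      using range_mv_subspace[of E] vec.span_eq_iff by blast
    have s2: "vec.span (range (\<lambda>x. E' *v x)) = range (\<lambda>x. E' *v x)"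
      using range_mv_subspace[of E'] vec.span_eq_iff by blast
    have "vec.dim (range (\<lambda>x. E' *v x)) < vec.dim (range (\<lambda>x. E *v x))"
      apply (rule vec.dim_psubset)
      unfolding s1 s2 by (rule ps)
    from less.hyps[OF this E'E'] obtain n where "trace E' = of_nat n" by blast
    then have "trace E = of_nat (Suc n)"
      using trF unfolding E'_def by (simp add: trace_sub algebra_simps)
    then show ?thesis by blast
  qed
qed

lemma invol_trace:
  fixes M :: "complex^'m::finite^'m"
  assumes MM: "M ** M = mat 1"
  shows "\<exists>r::real. trace M = of_real r \<and> r \<le> real CARD('m)"
proof -
  have h: "(\<Sum>k\<in>UNIV. M $ i $ k * M $ k $ j) = (if i = j then 1 else 0)" for i j
  proof -
    have "(M ** M) $ i $ j = mat 1 $ i $ j" using MM by simp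
    then show ?thesis by (simp add: matrix_matrix_mult_def mat_def)
  qed
  define E1 :: "complex^'m^'m" where "E1 = (\<chi> i j. ((if i = j then 1 else 0) + M $ i $ j) / 2)"
  define E2 :: "complex^'m^'m" where "E2 = (\<chi> i j. ((if i = j then 1 else 0) - M $ i $ j) / 2)"
  have sd: "(\<Sum>k\<in>UNIV. (if i = k then 1 else 0) * (X k :: complex)) = X i" for i :: 'm and X
    by (subst sum.cong[OF refl, of _ _ "\<lambda>k. if i = k then X k else 0"]) (auto simp: sum.delta sum.delta')
  have sd2: "(\<Sum>k\<in>UNIV. Y k * (if k = j then 1 else 0)) = (Y j :: complex)" for j :: 'm and Y
    by (subst sum.cong[OF refl, of _ _ "\<lambda>k. if k = j then Y k else 0"]) (auto simp: sum.delta sum.delta')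
  have "E1 ** E1 = E1"
  proof -
    have "(\<Sum>k\<in>UNIV. ((if i = k then 1 else 0) + M $ i $ k) / 2 * (((if k = j then 1 else 0) + M $ k $ j) / 2))
        = ((if i = j then 1 else 0) + M $ i $ j) / 2" for i j
    proof -
      have "(\<Sum>k\<in>UNIV. ((if i = k then 1 else 0) + M $ i $ k) / 2 * (((if k = j then 1 else 0) + M $ k $ j) / 2))
        = ((\<Sum>k\<in>UNIV. (if i = k then 1 else 0) * (if k = j then 1 else 0)) + (\<Sum>k\<in>UNIV. (if i = k then 1 else 0) * M $ k $ j)
           + (\<Sum>k\<in>UNIV. M $ i $ k * (if k = j then 1 else 0)) + (\<Sum>k\<in>UNIV. M $ i $ k * M $ k $ j)) / 4"
        apply (simp only: sum.distrib[symmetric] sum_subtractf[symmetric] sum_divide_distrib)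
        by (rule sum.cong) (simp_all add: field_simps)
      also have "\<dots> = ((if i = j then 1 else 0) + M $ i $ j) / 2"
        by (simp only: sd sd2 h) simp
      finally show ?thesis .
    qed
    then show ?thesis by (simp add: E1_def vec_eq_iff matrix_matrix_mult_def)
  qed
  moreover have "E2 ** E2 = E2"
  proof -
    have "(\<Sum>k\<in>UNIV. ((if i = k then 1 else 0) - M $ i $ k) / 2 * (((if k = j then 1 else 0) - M $ k $ j) / 2))
        = ((if i = j then 1 else 0) - M $ i $ j) / 2" for i j
    proof -
      have "(\<Sum>k\<in>UNIV. ((if i = k then 1 else 0) - M $ i $ k) / 2 * (((if k = j then 1 else 0) - M $ k $ j) / 2))
        = ((\<Sum>k\<in>UNIV. (if i = k then 1 else 0) * (if k = j then 1 else 0)) - (\<Sum>k\<in>UNIV. (if i = k then 1 else 0) * M $ k $ j)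
           - (\<Sum>k\<in>UNIV. M $ i $ k * (if k = j then 1 else 0)) + (\<Sum>k\<in>UNIV. M $ i $ k * M $ k $ j)) / 4"
        apply (simp only: sum.distrib[symmetric] sum_subtractf[symmetric] sum_divide_distrib)
        by (rule sum.cong) (simp_all add: field_simps)
      also have "\<dots> = ((if i = j then 1 else 0) - M $ i $ j) / 2"
        by (simp only: sd sd2 h) simp
      finally show ?thesis .
    qed
    then show ?thesis by (simp add: E2_def vec_eq_iff matrix_matrix_mult_def)
  qed
  ultimately obtain k1 k2 where k1: "trace E1 = of_nat k1" and k2: "trace E2 = of_nat k2"
    using idem_trace_nat by blast
  have t1: "trace E1 = (of_nat CARD('m) + trace M) / 2"
    by (simp add: E1_def trace_def sum.distrib sum_divide_distrib[symmetric])
  have t2: "trace E2 = (of_nat CARD('m) - trace M) / 2"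
    by (simp add: E2_def trace_def sum_subtractf sum_divide_distrib[symmetric])
  have e1: "2 * of_nat k1 = of_nat CARD('m) + trace M" using t1 k1 by (simp add: mult.commute)
  have e2: "2 * of_nat k2 = of_nat CARD('m) - trace M" using t2 k2 by (simp add: mult.commute)
  have "2 * (of_nat k1 - of_nat k2) = (2::complex) * trace M"
    unfolding right_diff_distrib e1 e2 by simp
  then have a: "trace M = of_nat k1 - of_nat k2" by (metis mult_cancel_left zero_neq_numeral)
  have "2 * (of_nat k1 + of_nat k2) = (2::complex) * of_nat CARD('m)"
    unfolding distrib_left e1 e2 by simp
  then have b: "of_nat CARD('m) = (of_nat k1 + of_nat k2 :: complex)" by (metis mult_cancel_left zero_neq_numeral)
  then have "CARD('m) = k1 + k2" by (metis of_nat_add of_nat_eq_iff)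
  then show ?thesis using a by (intro exI[of _ "real k1 - real k2"]) simp
qed

definition hf :: "complex^'n::finite^'n \<Rightarrow> complex^'n \<Rightarrow> complex^'n \<Rightarrow> complex" where
  "hf B x y = (\<Sum>i\<in>UNIV. \<Sum>j\<in>UNIV. cnj (x$i) * B$i$j * y$j)"

lemma hf_mv: "hf B x y = (\<Sum>i\<in>UNIV. cnj (x$i) * (B *v y)$i)"
  by (simp add: hf_def matrix_vector_mult_def sum_distrib_left mult.assoc)

lemma sum_cnj_self: "(\<Sum>i\<in>UNIV. cnj (x$i) * x$i) = complex_of_real (norm x ^ 2)"
proof -
  have "norm x ^ 2 = (\<Sum>i\<in>UNIV. (norm (x$i))^2)"
    unfolding norm_vec_def L2_set_def by (simp add: sum_nonneg)
  then have "complex_of_real (norm x ^ 2) = (\<Sum>i\<in>UNIV. complex_of_real ((norm (x$i))^2))"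
    by (simp only: of_real_sum)
  also have "\<dots> = (\<Sum>i\<in>UNIV. cnj (x$i) * x$i)"
    by (simp only: complex_norm_square mult.commute)
  finally show ?thesis by simp
qed

lemma hf_herm: assumes "hermitian_mat B" shows "hf B x y = cnj (hf B y x)"
proof -
  have h: "cnj (B$i$j) = B$j$i" for i j
    using assms unfolding hermitian_mat_def by (metis complex_cnj_cnj)
  have "cnj (hf B y x) = (\<Sum>i\<in>UNIV. \<Sum>j\<in>UNIV. y$i * B$j$i * cnj (x$j))"
    by (simp add: hf_def h)
  also have "\<dots> = (\<Sum>j\<in>UNIV. \<Sum>i\<in>UNIV. y$i * B$j$i * cnj (x$j))"
    by (rule sum.swap)
  also have "\<dots> = hf B x y"
    by (simp add: hf_def mult_ac)
  finally show ?thesis by simp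
qed

lemma hf_scale: "hf B (r *\<^sub>R x) (r *\<^sub>R x) = of_real (r^2) * hf B x x"
proof -
  have "cnj ((r *\<^sub>R x)$i) * B$i$j * (r *\<^sub>R x)$j = of_real (r^2) * (cnj (x$i) * B$i$j * x$j)" for i j
    apply (simp only: vector_scaleR_component)
    apply (simp only: scaleR_conv_of_real complex_cnj_mult complex_cnj_complex_of_real of_real_power)
    by algebra
  then show ?thesis by (simp add: hf_def sum_distrib_left)
qed

lemma hf_shift: "hf (A - mat c) x x = hf A x x - c * of_real (norm x ^ 2)"
proof -
  have "hf (mat c) x x = c * of_real (norm x ^ 2)"
  proof -
    have "hf (mat c) x x = (\<Sum>i\<in>UNIV. cnj (x$i) * (c * x$i))"
      unfolding hf_mv by (simp add: matrix_vector_mult_def mat_def if_distrib[where f="\<lambda>a. a * _"] cong: if_cong)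
    also have "\<dots> = c * (\<Sum>i\<in>UNIV. cnj (x$i) * x$i)"
      by (simp add: sum_distrib_left mult_ac)
    finally show ?thesis by (simp add: sum_cnj_self)
  qed
  moreover have "hf (A - mat c) x x = hf A x x - hf (mat c) x x"
    by (simp add: hf_def sum_subtractf algebra_simps)
  ultimately show ?thesis by simp
qed

lemma hf_expand:
  "hf B (v + t *\<^sub>R w) (v + t *\<^sub>R w) = hf B v v + of_real t * (hf B v w + hf B w v) + (of_real t)^2 * hf B w w"
proof -
  have pw: "cnj ((v + t *\<^sub>R w)$i) * B$i$j * (v + t *\<^sub>R w)$j =
     cnj (v$i) * B$i$j * v$j + of_real t * (cnj (v$i) * B$i$j * w$j + cnj (w$i) * B$i$j * v$j)
     + (of_real t)^2 * (cnj (w$i) * B$i$j * w$j)" for i j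
    apply (simp only: vector_add_component vector_scaleR_component)
    apply (simp only: scaleR_conv_of_real complex_cnj_add complex_cnj_mult complex_cnj_complex_of_real)
    by algebra
  have "hf B (v + t *\<^sub>R w) (v + t *\<^sub>R w) = (\<Sum>i\<in>UNIV. \<Sum>j\<in>UNIV. cnj (v$i) * B$i$j * v$j + of_real t * (cnj (v$i) * B$i$j * w$j + cnj (w$i) * B$i$j * v$j)
     + (of_real t)^2 * (cnj (w$i) * B$i$j * w$j))"
    unfolding hf_def by (simp only: pw)
  also have "\<dots> = hf B v v + of_real t * (hf B v w + hf B w v) + (of_real t)^2 * hf B w w"
    by (simp only: hf_def sum.distrib sum_distrib_left distrib_left)
  finally show ?thesis .
qed
lemma re_aux: "Re (a + complex_of_real t * b + (complex_of_real t)^2 * z) = Re a + t * Re b + t^2 * Re z"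
  by (simp add: power2_eq_square)

lemma psd_form:
  fixes A :: "complex^'n::finite^'n"
  assumes "psd A"
  shows "0 \<le> Re (hf A x x)"
proof -
  have herm: "hermitian_mat A" and ev: "\<And>c. is_eigenvalue A c \<Longrightarrow> c \<in> \<real> \<and> Re c \<ge> 0"
    using assms by (auto simp: psd_def)
  define Q where "Q x = Re (hf A x x)" for x
  define S :: "(complex^'n) set" where "S = sphere 0 1"
  have cS: "compact S" unfolding S_def by simp
  obtain i0 :: 'n where True by simp
  define x0 :: "complex^'n" where "x0 = axis i0 1"
  have "x0 \<noteq> 0" unfolding x0_def by (simp add: axis_eq_0_iff)
  then have "(1 / norm x0) *\<^sub>R x0 \<in> S" unfolding S_def by simp
  then have neS: "S \<noteq> {}" by blast
  have cont: "continuous_on S Q"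
    unfolding Q_def hf_def by (intro continuous_intros)
  obtain v where vS: "v \<in> S" and vmin: "\<And>y. y \<in> S \<Longrightarrow> Q v \<le> Q y"
    using continuous_attains_inf[OF cS neS cont] by blast
  define l where "l = Q v"
  have nv: "norm v = 1" using vS S_def by simp
  have ge: "Q x \<ge> l * (norm x)^2" for x
  proof (cases "x = 0")
    case True then show ?thesis by (simp add: Q_def hf_def)
  next
    case False
    define u where "u = (1 / norm x) *\<^sub>R x"
    have "u \<in> S" using False unfolding S_def u_def by simp
    then have "l \<le> Q u" using vmin l_def by simp
    have "x = norm x *\<^sub>R u" using False unfolding u_def by simp
    then have "Q x = Q (norm x *\<^sub>R u)" by simp
    also have "\<dots> = (norm x)^2 * Q u" unfolding Q_def hf_scale by simp
    finally have "Q x = (norm x)^2 * Q u" .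
    moreover have "l * (norm x)^2 \<le> Q u * (norm x)^2"
      using \<open>l \<le> Q u\<close> by (rule mult_right_mono) simp
    ultimately show ?thesis by (simp add: mult.commute)
  qed
  define B where "B = A - mat (complex_of_real l)"
  have hermB: "hermitian_mat B"
    unfolding hermitian_mat_def
  proof (intro allI)
    fix i j
    have h: "A$i$j = cnj (A$j$i)" using herm unfolding hermitian_mat_def by blast
    show "B $ i $ j = cnj (B $ j $ i)" unfolding B_def by (simp add: mat_def h)
  qed
  define P where "P x = Re (hf B x x)" for x
  have PQ: "P x = Q x - l * (norm x)^2" for x
    unfolding P_def Q_def B_def hf_shift by simp
  have Pnn: "P x \<ge> 0" for x using ge[of x] PQ[of x] by simp
  have Pv: "P v = 0" using PQ[of v] nv l_def by simp
  define w where "w = B *v v"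
  define c where "c = Re (hf B w v)"
  define d where "d = Re (hf B w w)"
  have c_eq: "c = (norm w)^2"
    unfolding c_def hf_mv w_def[symmetric] sum_cnj_self by simp
  have d0: "d \<ge> 0" using Pnn[of w] unfolding P_def d_def .
  have quad: "0 \<le> 2 * t * c + t^2 * d" for t
  proof -
    have e1: "Re (hf B v w) = c"
      unfolding c_def hf_herm[OF hermB, of v w] cnj.sel(1) by (rule refl)
    have "P (v + t *\<^sub>R w) = P v + t * (Re (hf B v w) + Re (hf B w v)) + t^2 * d"
      unfolding P_def hf_expand re_aux d_def by simp
    then have "P (v + t *\<^sub>R w) = t * (c + c) + t^2 * d" unfolding e1 c_def[symmetric] Pv by simp
    moreover have "t * (c + c) = 2 * t * c" by simp
    ultimately show ?thesis using Pnn[of "v + t *\<^sub>R w"] by linarith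
  qed
  have "c = 0"
  proof (rule ccontr)
    assume "c \<noteq> 0"
    then have cp: "c > 0" using c_eq by simp
    show False
    proof (cases "d = 0")
      case True
      then show False using quad[of "-1"] cp by simp
    next
      case False
      then have dp: "d > 0" using d0 by simp
      have "2 * (- c / d) * c + (- c / d)^2 * d = - (c^2 / d)"
        using dp by (simp add: power2_eq_square field_simps)
      moreover have "c^2 / d > 0" using cp dp by simp
      ultimately show False using quad[of "- c / d"] by linarith
    qed
  qed
  then have "w = 0" using c_eq by simp
  then have "A *v v = complex_of_real l *s v"
    unfolding w_def B_def
  proof -
    have "B *v v = 0" using \<open>w = 0\<close> w_def by simp
    moreover have "B *v v = A *v v - complex_of_real l *s v"
    proof -
      have "(\<Sum>j\<in>UNIV. (if i = j then complex_of_real l else 0) * v $ j) = complex_of_real l * v $ i" for i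
        by (subst sum.cong[OF refl, of _ _ "\<lambda>j. if i = j then complex_of_real l * v $ j else 0"]) (auto simp: sum.delta')
      then show ?thesis unfolding B_def
        by (simp add: vec_eq_iff matrix_vector_mult_def mat_def sum_subtractf left_diff_distrib)
    qed
    ultimately show ?thesis by simp
  qed
  moreover have "v \<noteq> 0" using nv by auto
  ultimately have "is_eigenvalue A (complex_of_real l)" unfolding is_eigenvalue_def by blast
  then have "l \<ge> 0" using ev[of "complex_of_real l"] by simp
  then have "l * (norm x)^2 \<ge> 0" by simp
  then show ?thesis using ge[of x] unfolding Q_def by linarith
qed
lemma hf_axis: "hf B (axis a 1) (axis b 1) = B $ a $ b"
proof -
  have "hf B (axis a 1) (axis b 1) = (\<Sum>i\<in>UNIV. \<Sum>j\<in>UNIV. if i = a then (if j = b then B$i$j else 0) else 0)"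
    unfolding hf_def by (intro sum.cong refl) (simp add: axis_def)
  also have "\<dots> = (\<Sum>i\<in>UNIV. if i = a then B $ i $ b else 0)"
  proof (rule sum.cong[OF refl])
    fix i show "(\<Sum>j\<in>UNIV. if i = a then (if j = b then B$i$j else 0) else 0) = (if i = a then B $ i $ b else 0)"
      by (cases "i = a") (simp_all add: sum.delta)
  qed
  also have "\<dots> = B $ a $ b" by (simp add: sum.delta)
  finally show ?thesis .
qed

lemma hf_cexp:
  "hf B (u + z *s w) (u + z *s w) = hf B u u + z * hf B u w + cnj z * hf B w u + (z * cnj z) * hf B w w"
proof -
  have pw: "cnj ((u + z *s w)$i) * B$i$j * (u + z *s w)$j =
     cnj (u$i) * B$i$j * u$j + z * (cnj (u$i) * B$i$j * w$j) + cnj z * (cnj (w$i) * B$i$j * u$j)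
     + (z * cnj z) * (cnj (w$i) * B$i$j * w$j)" for i j
    apply (simp only: vector_add_component vector_smult_component complex_cnj_add complex_cnj_mult)
    by algebra
  have "hf B (u + z *s w) (u + z *s w) = (\<Sum>i\<in>UNIV. \<Sum>j\<in>UNIV. cnj (u$i) * B$i$j * u$j + z * (cnj (u$i) * B$i$j * w$j) + cnj z * (cnj (w$i) * B$i$j * u$j)
     + (z * cnj z) * (cnj (w$i) * B$i$j * w$j))"
    unfolding hf_def by (simp only: pw)
  also have "\<dots> = hf B u u + z * hf B u w + cnj z * hf B w u + (z * cnj z) * hf B w w"
    by (simp only: hf_def sum.distrib sum_distrib_left)
  finally show ?thesis .
qed

lemma psd_diag:
  fixes A :: "complex^'n::finite^'n"
  assumes "psd A"
  shows "0 \<le> A $ i $ i"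
proof -
  have h: "A $ i $ i = cnj (A $ i $ i)" using assms unfolding psd_def hermitian_mat_def by blast
  have "Im (A $ i $ i) = 0" using arg_cong[OF h, of Im] by simp
  moreover have "0 \<le> Re (A $ i $ i)" using psd_form[OF assms, of "axis i 1"] by (simp add: hf_axis)
  ultimately show ?thesis by (simp add: less_eq_complex_def)
qed

lemma psd_row0:
  fixes A :: "complex^'n::finite^'n"
  assumes "psd A" and z: "A $ i $ i = 0"
  shows "A $ i $ j = 0"
proof (rule ccontr)
  assume nz: "A $ i $ j \<noteq> 0"
  then have ij: "i \<noteq> j" using z by auto
  have h: "A $ j $ i = cnj (A $ i $ j)" using assms unfolding psd_def hermitian_mat_def by blast
  define a where "a = A $ i $ j"
  define q where "q = (cmod a)^2"
  have qp: "q > 0" using nz unfolding q_def a_def by simp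
  have key: "0 \<le> Re (A $ j $ j) - 2 * r * q" for r :: real
  proof -
    have "0 \<le> Re (hf A (axis j 1 + (- of_real r * a) *s axis i 1) (axis j 1 + (- of_real r * a) *s axis i 1))"
      by (rule psd_form[OF assms(1)])
    also have "hf A (axis j 1 + (- of_real r * a) *s axis i 1) (axis j 1 + (- of_real r * a) *s axis i 1)
       = A $ j $ j - of_real r * (a * cnj a) - of_real r * (cnj a * a)"
      unfolding hf_cexp hf_axis h z a_def by simp
    also have "a * cnj a = of_real q" unfolding q_def by (rule complex_norm_square[symmetric])
    also have "cnj a * a = of_real q" unfolding q_def by (simp only: complex_norm_square mult.commute)
    finally show ?thesis by (simp add: mult_ac)
  qed
  define r where "r = (\<bar>Re (A $ j $ j)\<bar> + 1) / (2 * q)"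
  have "2 * r * q = \<bar>Re (A $ j $ j)\<bar> + 1" unfolding r_def using qp by simp
  then show False using key[of r] by linarith
qed

lemma prod_invol:
  fixes A :: "complex^'n::finite^'n"
  assumes herm: "hermitian_mat A" and dg: "\<And>i. 0 \<le> A $ i $ i"
    and inv: "\<And>i. \<sigma> (\<sigma> i) = i"
  shows "finite S \<Longrightarrow> (\<forall>i\<in>S. \<sigma> i \<in> S) \<Longrightarrow> 0 \<le> (\<Prod>i\<in>S. A $ i $ \<sigma> i)"
proof (induction "card S" arbitrary: S rule: less_induct)
  case less
  show ?case
  proof (cases "S = {}")
    case True then show ?thesis by (simp add: less_eq_complex_def)
  next
    case False
    then obtain i where iS: "i \<in> S" by blast
    show ?thesis
    proof (cases "\<sigma> i = i")
      case True
      let ?S' = "S - {i}"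
      have cl: "\<forall>k\<in>?S'. \<sigma> k \<in> ?S'" using less.prems(2) inv True by (metis Diff_iff singletonD singletonI)
      have "card ?S' < card S" using iS less.prems(1) by (rule card_Diff1_less[rotated])
      then have "0 \<le> (\<Prod>k\<in>?S'. A $ k $ \<sigma> k)" using less.hyps less.prems(1) cl by simp
      moreover have "(\<Prod>k\<in>S. A $ k $ \<sigma> k) = A $ i $ \<sigma> i * (\<Prod>k\<in>?S'. A $ k $ \<sigma> k)"
        using iS less.prems(1) by (simp add: prod.remove)
      ultimately show ?thesis using dg[of i] True by (simp add: mult_nonneg_nonneg)
    next
      case False
      let ?S' = "S - {i, \<sigma> i}"
      have si: "\<sigma> i \<in> S" using iS less.prems(2) by blast
      have cl: "\<forall>k\<in>?S'. \<sigma> k \<in> ?S'"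
      proof
        fix k assume k: "k \<in> ?S'"
        then have "\<sigma> k \<noteq> i" using inv by (metis insertCI Diff_iff)
        moreover have "\<sigma> k \<noteq> \<sigma> i" using k inv by (metis insertCI Diff_iff)
        ultimately show "\<sigma> k \<in> ?S'" using k less.prems(2) by blast
      qed
      have "card ?S' < card S" using iS less.prems(1) by (intro psubset_card_mono) auto
      then have "0 \<le> (\<Prod>k\<in>?S'. A $ k $ \<sigma> k)" using less.hyps less.prems(1) cl by simp
      moreover have "(\<Prod>k\<in>S. A $ k $ \<sigma> k) = A $ i $ \<sigma> i * (A $ \<sigma> i $ \<sigma> (\<sigma> i) * (\<Prod>k\<in>?S'. A $ k $ \<sigma> k))"
      proof -
        have "(\<Prod>k\<in>S. A $ k $ \<sigma> k) = A $ i $ \<sigma> i * (\<Prod>k\<in>S - {i}. A $ k $ \<sigma> k)"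
          using iS less.prems(1) by (simp add: prod.remove)
        moreover have "(\<Prod>k\<in>S - {i}. A $ k $ \<sigma> k) = A $ \<sigma> i $ \<sigma> (\<sigma> i) * (\<Prod>k\<in>S - {i} - {\<sigma> i}. A $ k $ \<sigma> k)"
          using si False less.prems(1) by (intro prod.remove) auto
        moreover have "S - {i} - {\<sigma> i} = ?S'" by blast
        ultimately show ?thesis by simp
      qed
      moreover have "A $ \<sigma> i $ \<sigma> (\<sigma> i) = cnj (A $ i $ \<sigma> i)"
        using herm inv unfolding hermitian_mat_def by metis
      moreover have "0 \<le> A $ i $ \<sigma> i * cnj (A $ i $ \<sigma> i)"
        by (simp only: complex_norm_square[symmetric]) (simp add: less_eq_complex_def power2_eq_square)
      ultimately show ?thesis by (metis mult.assoc mult_nonneg_nonneg)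
    qed
  qed
qed

lemma nonzero_invol:
  fixes A :: "complex^'n::finite^'n"
  assumes nz: "\<And>i j. A $ i $ j \<noteq> 0 \<Longrightarrow> j = \<alpha> i \<or> j = \<beta> i"
    and dg: "\<And>i. \<alpha> i \<noteq> i \<Longrightarrow> \<beta> i \<noteq> i \<Longrightarrow> A $ i $ i = 0"
    and row0: "\<And>i j. A $ i $ i = 0 \<Longrightarrow> A $ i $ j = 0"
    and herm: "hermitian_mat A"
    and sp: "\<sigma> permutes (UNIV :: 'n set)"
    and w: "(\<Prod>i\<in>UNIV. A $ i $ \<sigma> i) \<noteq> 0"
  shows "\<sigma> (\<sigma> i) = i"
proof -
  have fz: "A $ k $ \<sigma> k \<noteq> 0" for k using w by (simp add: prod_zero_iff)
  have ab: "\<alpha> k = k \<or> \<beta> k = k" for k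
    using fz[of k] dg[of k] row0[of k] by blast
  show ?thesis
  proof (cases "\<sigma> i = i")
    case True then show ?thesis by simp
  next
    case False
    define j where "j = \<sigma> i"
    have "A $ j $ i = cnj (A $ i $ j)" using herm unfolding hermitian_mat_def by blast
    then have "A $ j $ i \<noteq> 0" using fz[of i] j_def by simp
    then have ji: "i = \<alpha> j \<or> i = \<beta> j" using nz by blast
    have "\<sigma> j \<noteq> j" using False sp j_def by (metis permutes_inj injD)
    moreover have "\<sigma> j = \<alpha> j \<or> \<sigma> j = \<beta> j" using nz fz[of j] by blast
    moreover have "i \<noteq> j" using False j_def by simp
    ultimately have "\<sigma> j = i" using ab[of j] ji by auto
    then show ?thesis using j_def by simp
  qed
qed

theorem theorem3p7:
  fixes a b :: complex and \<theta> \<tau> :: "'n::finite \<Rightarrow> 'n"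
    and G :: "('n \<Rightarrow> 'n) set" and \<rho> :: "('n \<Rightarrow> 'n) \<Rightarrow> complex^'m::finite^'m"
    and \<chi>' :: "('n \<Rightarrow> 'n) \<Rightarrow> complex"
  assumes "\<theta> permutes (UNIV :: 'n set)" and "\<tau> permutes (UNIV :: 'n set)"
    and "psd (mat_scale a (perm_mat \<theta>) + mat_scale b (perm_mat \<tau>))"
    and "perm_subgroup G"
    and "is_representation G \<rho>"
    and "\<forall>g\<in>G. \<chi>' g = trace (\<rho> g)"
  shows "gen_matrix_fun G \<chi>' (mat_scale a (perm_mat \<theta>) + mat_scale b (perm_mat \<tau>)) / \<chi>' id
           \<le> per (mat_scale a (perm_mat \<theta>) + mat_scale b (perm_mat \<tau>))"
proof -
  define M where "M = mat_scale a (perm_mat \<theta>) + mat_scale b (perm_mat \<tau>)"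
  have psdM: "psd M" using assms(3) M_def by simp
  have Mij: "M $ i $ j = (if inv \<theta> i = j then a else 0) + (if inv \<tau> i = j then b else 0)" for i j
    unfolding M_def by (simp add: mat_scale_def perm_mat_def)
  have herm: "hermitian_mat M" using psdM psd_def by blast
  define W where "W \<sigma> = (\<Prod>i\<in>UNIV. M $ i $ \<sigma> i)" for \<sigma> :: "'n \<Rightarrow> 'n"
  have invol: "\<sigma> (\<sigma> i) = i" if sp: "\<sigma> permutes (UNIV :: 'n set)" and w: "W \<sigma> \<noteq> 0" for \<sigma> i
  proof (rule nonzero_invol[of M "inv \<theta>" "inv \<tau>"])
    show "\<And>i j. M $ i $ j \<noteq> 0 \<Longrightarrow> j = inv \<theta> i \<or> j = inv \<tau> i" by (auto simp: Mij split: if_splits)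
    show "\<And>i. inv \<theta> i \<noteq> i \<Longrightarrow> inv \<tau> i \<noteq> i \<Longrightarrow> M $ i $ i = 0" by (simp add: Mij)
    show "\<And>i j. M $ i $ i = 0 \<Longrightarrow> M $ i $ j = 0" using psd_row0[OF psdM] by blast
  qed (use herm sp w W_def in auto)
  have Wnn: "0 \<le> W \<sigma>" if sp: "\<sigma> permutes (UNIV :: 'n set)" for \<sigma>
  proof (cases "W \<sigma> = 0")
    case True then show ?thesis by simp
  next
    case False
    show ?thesis unfolding W_def
      by (rule prod_invol[OF herm psd_diag[OF psdM]]) (use invol[OF sp False] in auto)
  qed
  have pg: "(\<forall>\<sigma>\<in>G. \<sigma> permutes (UNIV :: 'n set)) \<and> id \<in> G"
    using assms(4) unfolding perm_subgroup_def apply (elim conjE) apply (intro conjI) apply assumption+ done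
  have GP: "\<And>\<sigma>. \<sigma> \<in> G \<Longrightarrow> \<sigma> permutes (UNIV :: 'n set)" using pg by (elim conjE) (erule bspec)
  have idG: "id \<in> G" using pg by (elim conjE)
  have rr: "\<rho> id = mat 1 \<and> (\<forall>\<sigma>\<in>G. \<forall>\<tau>\<in>G. \<rho> (\<sigma> \<circ> \<tau>) = \<rho> \<sigma> ** \<rho> \<tau>)"
    using assms(5) unfolding is_representation_def .
  have rid: "\<rho> id = mat 1" using rr by (elim conjE)
  have rmul: "\<And>\<sigma> \<tau>. \<sigma> \<in> G \<Longrightarrow> \<tau> \<in> G \<Longrightarrow> \<rho> (\<sigma> \<circ> \<tau>) = \<rho> \<sigma> ** \<rho> \<tau>"
    using rr by (elim conjE) blast
  have chid: "\<chi>' id = of_nat CARD('m)" using assms(6) idG rid by (simp add: trace_I)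
  have finP: "finite {\<sigma>. \<sigma> permutes (UNIV :: 'n set)}" by (simp add: finite_permutations)
  have GsubP: "G \<subseteq> {\<sigma>. \<sigma> permutes (UNIV :: 'n set)}" using GP by blast
  have finG: "finite G" using finite_subset[OF GsubP finP] .
  have tm: "\<chi>' \<sigma> * W \<sigma> \<le> of_nat CARD('m) * W \<sigma>" if sG: "\<sigma> \<in> G" for \<sigma>
  proof (cases "W \<sigma> = 0")
    case True then show ?thesis by simp
  next
    case False
    have "\<sigma> \<circ> \<sigma> = id" using invol[OF GP[OF sG] False] by (simp add: fun_eq_iff)
    then have "\<rho> \<sigma> ** \<rho> \<sigma> = mat 1" using rmul[OF sG sG] rid by simp
    then obtain r where r: "trace (\<rho> \<sigma>) = of_real r" "r \<le> real CARD('m)" using invol_trace by blast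
    have "\<chi>' \<sigma> = of_real r" using assms(6) sG r(1) by simp
    moreover have "(of_real r :: complex) \<le> of_nat CARD('m)" using r(2) by (simp add: less_eq_complex_def)
    ultimately show ?thesis using Wnn[OF GP[OF sG]] by (simp add: mult_right_mono)
  qed
  have "gen_matrix_fun G \<chi>' M = (\<Sum>\<sigma>\<in>G. \<chi>' \<sigma> * W \<sigma>)"
    unfolding gen_matrix_fun_def W_def by simp
  also have "\<dots> \<le> (\<Sum>\<sigma>\<in>G. of_nat CARD('m) * W \<sigma>)" by (rule sum_mono) (rule tm)
  also have "\<dots> = of_nat CARD('m) * (\<Sum>\<sigma>\<in>G. W \<sigma>)" by (simp add: sum_distrib_left)
  also have "(\<Sum>\<sigma>\<in>G. W \<sigma>) \<le> (\<Sum>\<sigma>\<in>{\<sigma>. \<sigma> permutes (UNIV :: 'n set)}. W \<sigma>)"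
    by (rule sum_mono2[OF finP GsubP]) (use Wnn in auto)
  also have "(\<Sum>\<sigma>\<in>{\<sigma>. \<sigma> permutes (UNIV :: 'n set)}. W \<sigma>) = per M"
    unfolding per_def W_def by simp
  finally have le0: "(\<And>x y. x \<le> y \<Longrightarrow> (of_nat CARD('m)::complex) * x \<le> of_nat CARD('m) * y) \<Longrightarrow>
      gen_matrix_fun G \<chi>' M \<le> of_nat CARD('m) * per M" .
  have mono: "\<And>x y. x \<le> y \<Longrightarrow> (of_nat CARD('m)::complex) * x \<le> of_nat CARD('m) * y"
    by (rule mult_left_mono) (auto simp: less_eq_complex_def)
  have le: "gen_matrix_fun G \<chi>' M \<le> of_nat CARD('m) * per M" by (rule le0[OF mono])
  have "gen_matrix_fun G \<chi>' M / of_nat CARD('m) \<le> per M"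
  proof -
    have cp: "real CARD('m) > 0" by simp
    show ?thesis using le cp by (simp add: less_eq_complex_def pos_divide_le_eq mult.commute)
  qed
  then show ?thesis using chid M_def by simp
qed


end
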